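(* Let $H$ be Higman's group, $H=\langle a_i\ (i\in\mathbb Z/4\mathbb Z)\mid a_i a_{i+1} a_i^{-1}=a_{i+1}^2 \text{ for all } i\in \mathbb Z/4\mathbb Z\rangle$. Every homomorphism $\rho:H\to \mathsf{Diff}^1(\mathbb R)$ is trivial.
   Context: $\mathsf{Diff}^1(\mathbb R)$ denotes the group of $C^1$-diffeomorphisms of the real line. *)

theory Defs
  imports "HOL-Analysis.Analysis"
begin

definition C1_real :: "(real \<Rightarrow> real) \<Rightarrow> bool" where
  "C1_real f \<longleftrightarrow> (\<exists>f'. (\<forall>x. (f has_real_derivative f' x) (at x)) \<and> continuous_on UNIV f')"

text \<open>Elements of Diff^1(R): bijections of R which are C1 with C1 inverse.
  The group law of Diff^1(R) is composition, the identity is id, inverses are inv.\<close>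
definition C1_diffeo :: "(real \<Rightarrow> real) \<Rightarrow> bool" where
  "C1_diffeo f \<longleftrightarrow> bij f \<and> C1_real f \<and> C1_real (inv f)"

text \<open>By the universal
  property of group presentations, homomorphisms H -> Diff^1(R) correspond exactly
  to such 4-tuples.\<close>
definition higman_rep :: "(nat \<Rightarrow> real \<Rightarrow> real) \<Rightarrow> bool" where
  "higman_rep a \<longleftrightarrow>
     (\<forall>i<4. C1_diffeo (a i)) \<and>
     (\<forall>i<4. a i \<circ> a ((i + 1) mod 4) \<circ> inv (a i) = a ((i + 1) mod 4) \<circ> a ((i + 1) mod 4))"

end

theory Submission
  imports Defs
begin

definition tp :: "(real \<Rightarrow> real) \<Rightarrow> bool" where
  "tp f \<longleftrightarrow> bij f \<and> strict_mono f \<and> continuous_on UNIV f \<and> continuous_on UNIV (inv f)"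

definition PR :: "(real \<Rightarrow> real) \<Rightarrow> (real \<Rightarrow> real) \<Rightarrow> bool" where
  "PR a b \<longleftrightarrow> (\<forall>x. a (b x) = b (b (a x)))"

definition conv :: "real set \<Rightarrow> bool" where
  "conv I \<longleftrightarrow> (\<forall>x y u. x \<in> I \<longrightarrow> y \<in> I \<longrightarrow> x \<le> u \<longrightarrow> u \<le> y \<longrightarrow> u \<in> I)"

definition invs :: "(real \<Rightarrow> real) \<Rightarrow> real set \<Rightarrow> bool" where
  "invs f I \<longleftrightarrow> (\<forall>x. f x \<in> I \<longleftrightarrow> x \<in> I)"

lemma tp_inv_f: "tp f \<Longrightarrow> inv f (f x) = x"
  unfolding tp_def by (meson bij_is_inj inv_f_f)

lemma tp_f_inv: "tp f \<Longrightarrow> f (inv f x) = x"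
  unfolding tp_def by (meson bij_is_surj surj_f_inv_f)

lemma tp_less: "tp f \<Longrightarrow> f x < f y \<longleftrightarrow> x < y"
  unfolding tp_def by (simp add: strict_mono_less)

lemma tp_le: "tp f \<Longrightarrow> f x \<le> f y \<longleftrightarrow> x \<le> y"
  unfolding tp_def by (simp add: strict_mono_less_eq)

lemma tp_eq: "tp f \<Longrightarrow> f x = f y \<longleftrightarrow> x = y"
  by (metis tp_inv_f)

lemma tp_isCont: "tp f \<Longrightarrow> isCont f x"
  unfolding tp_def by (simp add: continuous_on_eq_continuous_at)

lemma tp_inv: "tp f \<Longrightarrow> tp (inv f)"
proof -
  assume t: "tp f"
  have "bij (inv f)" using t unfolding tp_def by (simp add: bij_imp_bij_inv)
  moreover have "strict_mono (inv f)"
  proof (rule strict_monoI)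
    fix x y :: real assume "x < y"
    show "inv f x < inv f y"
    proof (rule ccontr)
      assume "\<not> inv f x < inv f y"
      hence "f (inv f y) \<le> f (inv f x)" using t tp_le by force
      thus False using \<open>x < y\<close> t tp_f_inv by (metis not_le)
    qed
  qed
  moreover have "inv (inv f) = f" using t unfolding tp_def by (simp add: inv_inv_eq)
  ultimately show ?thesis using t unfolding tp_def by simp
qed

lemma invs_inv: "tp f \<Longrightarrow> invs f I \<Longrightarrow> invs (inv f) I"
  unfolding invs_def by (metis tp_f_inv)

lemma PR_fix:
  assumes "tp a" "tp b" "PR a b" "b x = x" shows "b (a x) = a x"
proof -
  have e: "a x = b (b (a x))" using assms unfolding PR_def by metis
  show ?thesis
  proof (rule ccontr)
    assume "b (a x) \<noteq> a x"
    hence "b (a x) < a x \<or> a x < b (a x)" by linarith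
    thus False
    proof
      assume h: "b (a x) < a x"
      hence "b (b (a x)) < b (a x)" using assms(2) tp_less by blast
      thus False using h e by linarith
    next
      assume h: "a x < b (a x)"
      hence "b (a x) < b (b (a x))" using assms(2) tp_less by blast
      thus False using h e by linarith
    qed
  qed
qed

lemma PR_fix_inv:
  assumes "tp a" "tp b" "PR a b" "b x = x" shows "b (inv a x) = inv a x"
proof -
  let ?y = "inv a x"
  have ay: "a ?y = x" using assms(1) tp_f_inv by blast
  have "a (b ?y) = b (b (a ?y))" using assms(3) unfolding PR_def by blast
  also have "\<dots> = a ?y" using ay assms(4) by simp
  finally show ?thesis using assms(1) tp_eq by blast
qed

lemma PR_inv:
  assumes "tp a" "tp b" "PR a b" shows "PR a (inv b)"
  unfolding PR_def
proof
  fix x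
  let ?u = "inv b x"
  have "a x = a (b ?u)" using assms(2) tp_f_inv by metis
  also have "\<dots> = b (b (a ?u))" using assms(3) unfolding PR_def by blast
  finally have "a x = b (b (a ?u))" .
  hence "inv b (inv b (a x)) = a ?u" using assms(2) tp_inv_f by metis
  thus "a (inv b x) = inv b (inv b (a x))" by simp
qed

lemma PR_iter:
  assumes "PR a b" shows "a ((b ^^ n) x) = (b ^^ (2 * n)) (a x)"
proof (induction n)
  case 0 then show ?case by simp
next
  case (Suc n)
  have "a ((b ^^ Suc n) x) = b (b (a ((b ^^ n) x)))" using assms unfolding PR_def by simp
  also have "\<dots> = (b ^^ (2 * Suc n)) (a x)" using Suc by simp
  finally show ?case .
qed

lemma iter_invs: "invs b I \<Longrightarrow> (b ^^ n) x \<in> I \<longleftrightarrow> x \<in> I"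
  by (induction n) (auto simp: invs_def)

lemma iter_fix: "b p = p \<Longrightarrow> (b ^^ n) p = p"
  by (induction n) auto

lemma iter_less: "tp b \<Longrightarrow> (b ^^ n) x < (b ^^ n) y \<longleftrightarrow> x < y"
  by (induction n) (auto simp: tp_less)

lemma iter_le: "tp b \<Longrightarrow> (b ^^ n) x \<le> (b ^^ n) y \<longleftrightarrow> x \<le> y"
  by (induction n) (auto simp: tp_le)

lemma iter_up:
  assumes "\<forall>x\<in>I. x < b x" "invs b I" "x \<in> I" "m < n"
  shows "(b ^^ m) x < (b ^^ n) x"
proof -
  have "\<And>k. (b ^^ k) x < (b ^^ Suc k) x"
    using assms iter_invs by (simp add: iter_invs[of b I])
  thus ?thesis using assms(4) by (rule lift_Suc_mono_less)
qed

lemma iter_dn: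
  assumes "\<forall>x\<in>I. b x < x" "invs b I" "x \<in> I" "m < n"
  shows "(b ^^ n) x < (b ^^ m) x"
proof -
  have "\<And>k. - (b ^^ k) x < - (b ^^ Suc k) x"
    using assms by (simp add: iter_invs[of b I])
  hence "- (b ^^ m) x < - (b ^^ n) x" using assms(4) by (rule lift_Suc_mono_less)
  thus ?thesis by simp
qed


lemma ESC:
  assumes "tp b" "conv I" "invs b I" "\<forall>x\<in>I. x < b x" "x0 \<in> I" "y \<in> I"
  shows "\<exists>n. y < (b ^^ n) x0"
proof (rule ccontr)
  assume "\<not> ?thesis"
  hence bd: "\<forall>n. (b ^^ n) x0 \<le> y" by (simp add: not_less)
  let ?X = "\<lambda>n. (b ^^ n) x0"
  have "incseq ?X"
  proof (rule incseq_SucI)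
    fix n show "(b ^^ n) x0 \<le> (b ^^ Suc n) x0" using iter_up[OF assms(4,3,5), of n "Suc n"] by simp
  qed
  then obtain L where L: "?X \<longlonglongrightarrow> L" "\<forall>i. ?X i \<le> L" using bd incseq_convergent by blast
  have "L \<le> y" using L(1) bd by (simp add: LIMSEQ_le_const2)
  have "x0 \<le> L" using L(2)[rule_format, of 0] by simp
  have LI: "L \<in> I" using assms(2,5,6) \<open>L \<le> y\<close> \<open>x0 \<le> L\<close> unfolding conv_def by blast
  have "(\<lambda>n. b (?X n)) \<longlonglongrightarrow> b L" using L(1) tp_isCont[OF assms(1)] isCont_tendsto_compose by blast
  moreover have "(\<lambda>n. b (?X n)) \<longlonglongrightarrow> L" using LIMSEQ_Suc[OF L(1)] by simp
  ultimately have "b L = L" using LIMSEQ_unique by blast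
  thus False using assms(4) LI by force
qed

lemma ESC_dn:
  assumes "tp b" "conv I" "invs b I" "\<forall>x\<in>I. b x < x" "x0 \<in> I" "y \<in> I"
  shows "\<exists>n. (b ^^ n) x0 < y"
proof (rule ccontr)
  assume "\<not> ?thesis"
  hence bd: "\<forall>n. y \<le> (b ^^ n) x0" by (simp add: not_less)
  let ?X = "\<lambda>n. (b ^^ n) x0"
  have "decseq ?X"
  proof (rule decseq_SucI)
    fix n show "(b ^^ Suc n) x0 \<le> (b ^^ n) x0" using iter_dn[OF assms(4,3,5), of n "Suc n"] by simp
  qed
  then obtain L where L: "?X \<longlonglongrightarrow> L" "\<forall>i. L \<le> ?X i" using bd decseq_convergent by blast
  have "y \<le> L" using L(1) bd by (simp add: LIMSEQ_le_const)
  have "L \<le> x0" using L(2)[rule_format, of 0] by simp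
  have LI: "L \<in> I" using assms(2,5,6) \<open>y \<le> L\<close> \<open>L \<le> x0\<close> unfolding conv_def by blast
  have "(\<lambda>n. b (?X n)) \<longlonglongrightarrow> b L" using L(1) tp_isCont[OF assms(1)] isCont_tendsto_compose by blast
  moreover have "(\<lambda>n. b (?X n)) \<longlonglongrightarrow> L" using LIMSEQ_Suc[OF L(1)] by simp
  ultimately have "b L = L" using LIMSEQ_unique by blast
  thus False using assms(4) LI by force
qed

lemma iter_up_le:
  assumes "\<forall>x\<in>I. x < b x" "invs b I" "x \<in> I" "m \<le> n"
  shows "(b ^^ m) x \<le> (b ^^ n) x"
  using iter_up[OF assms(1-3)] assms(4) by (cases "m = n") (auto simp: less_imp_le)

lemma iter_dn_le:
  assumes "\<forall>x\<in>I. b x < x" "invs b I" "x \<in> I" "m \<le> n"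
  shows "(b ^^ n) x \<le> (b ^^ m) x"
  using iter_dn[OF assms(1-3)] assms(4) by (cases "m = n") (auto simp: less_imp_le)

lemma CORE_HI:
  assumes "tp a" "tp b" "PR a b" "conv I" "invs a I" "invs b I" "\<forall>x\<in>I. x < b x" "x0 \<in> I"
  shows "\<exists>z\<in>I. \<forall>x\<in>I. z \<le> x \<longrightarrow> x < a x"
proof -
  define y where "y = a x0"
  have yI: "y \<in> I" using assms(5,8) unfolding invs_def y_def by blast
  obtain K where K: "x0 < (b ^^ K) y" using ESC[OF assms(2,4,6,7) yI assms(8)] by blast
  define z where "z = (b ^^ (K+1)) x0"
  have zI: "z \<in> I" using iter_invs[OF assms(6)] assms(8) z_def by blast
  have zx0: "x0 < z" using iter_up[OF assms(7,6,8), of 0 "K+1"] z_def by simp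
  have claim: "\<forall>x\<in>I. z \<le> x \<longrightarrow> x < (b ^^ n) x0 \<longrightarrow> x < a x" for n
  proof (induction n)
    case 0 then show ?case using zx0 by auto
  next
    case (Suc n)
    show ?case
    proof (intro ballI impI)
      fix x assume xI: "x \<in> I" and zx: "z \<le> x" and xl: "x < (b ^^ Suc n) x0"
      show "x < a x"
      proof (cases "x < (b ^^ n) x0")
        case True then show ?thesis using Suc xI zx by blast
      next
        case False
        hence lx: "(b ^^ n) x0 \<le> x" by simp
        have Kn: "K + 1 \<le> n"
        proof (rule ccontr)
          assume "\<not> K + 1 \<le> n"
          hence "Suc n \<le> K + 1" by simp
          hence "(b ^^ Suc n) x0 \<le> z" using iter_up_le[OF assms(7,6,8)] z_def by blast
          thus False using zx xl by linarith
        qed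
        have "(b ^^ K) y \<le> (b ^^ (n - 1)) y" using iter_up_le[OF assms(7,6) yI] Kn by simp
        hence x0l: "x0 < (b ^^ (n - 1)) y" using K by linarith
        have "a ((b ^^ n) x0) \<le> a x" using lx assms(1) tp_le by blast
        moreover have "a ((b ^^ n) x0) = (b ^^ (2 * n)) y" using PR_iter[OF assms(3)] y_def by simp
        moreover have "(b ^^ (2 * n)) y = (b ^^ (Suc n)) ((b ^^ (n - 1)) y)"
        proof -
          have "2 * n = Suc n + (n - 1)" using Kn by simp
          thus ?thesis by (metis funpow_add comp_apply)
        qed
        moreover have "(b ^^ (Suc n)) x0 < (b ^^ (Suc n)) ((b ^^ (n - 1)) y)"
          using x0l iter_less[OF assms(2)] by blast
        ultimately show ?thesis using xl by linarith
      qed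
    qed
  qed
  show ?thesis
  proof (intro bexI[OF _ zI] ballI impI)
    fix x assume xI: "x \<in> I" and "z \<le> x"
    obtain n where "x < (b ^^ n) x0" using ESC[OF assms(2,4,6,7,8) xI] by blast
    thus "x < a x" using claim xI \<open>z \<le> x\<close> by blast
  qed
qed

lemma CORE_LO:
  assumes "tp a" "tp b" "PR a b" "conv I" "invs a I" "invs b I" "\<forall>x\<in>I. b x < x" "x0 \<in> I"
  shows "\<exists>z\<in>I. \<forall>x\<in>I. x \<le> z \<longrightarrow> a x < x"
proof -
  define y where "y = a x0"
  have yI: "y \<in> I" using assms(5,8) unfolding invs_def y_def by blast
  obtain K where K: "(b ^^ K) y < x0" using ESC_dn[OF assms(2,4,6,7) yI assms(8)] by blast
  define z where "z = (b ^^ (K+1)) x0"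
  have zI: "z \<in> I" using iter_invs[OF assms(6)] assms(8) z_def by blast
  have zx0: "z < x0" using iter_dn[OF assms(7,6,8), of 0 "K+1"] z_def by simp
  have claim: "\<forall>x\<in>I. x \<le> z \<longrightarrow> (b ^^ n) x0 < x \<longrightarrow> a x < x" for n
  proof (induction n)
    case 0 then show ?case using zx0 by auto
  next
    case (Suc n)
    show ?case
    proof (intro ballI impI)
      fix x assume xI: "x \<in> I" and zx: "x \<le> z" and xl: "(b ^^ Suc n) x0 < x"
      show "a x < x"
      proof (cases "(b ^^ n) x0 < x")
        case True then show ?thesis using Suc xI zx by blast
      next
        case False
        hence lx: "x \<le> (b ^^ n) x0" by simp
        have Kn: "K + 1 \<le> n"
        proof (rule ccontr)
          assume "\<not> K + 1 \<le> n"
          hence "Suc n \<le> K + 1" by simp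
          hence "z \<le> (b ^^ Suc n) x0" using iter_dn_le[OF assms(7,6,8)] z_def by blast
          thus False using zx xl by linarith
        qed
        have "(b ^^ (n - 1)) y \<le> (b ^^ K) y" using iter_dn_le[OF assms(7,6) yI] Kn by simp
        hence x0l: "(b ^^ (n - 1)) y < x0" using K by linarith
        have "a x \<le> a ((b ^^ n) x0)" using lx assms(1) tp_le by blast
        moreover have "a ((b ^^ n) x0) = (b ^^ (2 * n)) y" using PR_iter[OF assms(3)] y_def by simp
        moreover have "(b ^^ (2 * n)) y = (b ^^ (Suc n)) ((b ^^ (n - 1)) y)"
        proof -
          have "2 * n = Suc n + (n - 1)" using Kn by simp
          thus ?thesis by (metis funpow_add comp_apply)
        qed
        moreover have "(b ^^ (Suc n)) ((b ^^ (n - 1)) y) < (b ^^ (Suc n)) x0"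
          using x0l iter_less[OF assms(2)] by blast
        ultimately show ?thesis using xl by linarith
      qed
    qed
  qed
  show ?thesis
  proof (intro bexI[OF _ zI] ballI impI)
    fix x assume xI: "x \<in> I" and "x \<le> z"
    obtain n where "(b ^^ n) x0 < x" using ESC_dn[OF assms(2,4,6,7,8) xI] by blast
    thus "a x < x" using claim xI \<open>x \<le> z\<close> by blast
  qed
qed


lemma tp_cont_on: "tp f \<Longrightarrow> continuous_on S f"
  by (meson continuous_at_imp_continuous_on tp_isCont)

lemma DICH:
  assumes "tp g" "conv I" "\<forall>x\<in>I. g x \<noteq> x"
  shows "(\<forall>x\<in>I. x < g x) \<or> (\<forall>x\<in>I. g x < x)"
proof (rule ccontr)
  assume "\<not> ?thesis"
  then obtain x1 x2 where x1: "x1 \<in> I" "g x1 < x1" and x2: "x2 \<in> I" "x2 < g x2"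
    using assms(3) by (meson linorder_neqE_linordered_idom)
  have c: "continuous_on S (\<lambda>x. g x - x)" for S
    by (intro continuous_intros tp_cont_on[OF assms(1)])
  show False
  proof (cases "x1 \<le> x2")
    case True
    obtain x where "x1 \<le> x" "x \<le> x2" "g x - x = 0"
      using IVT'[of "\<lambda>x. g x - x" x1 0 x2] c x1 x2 True by force
    moreover have "x \<in> I" using assms(2) x1 x2 calculation unfolding conv_def by blast
    ultimately show False using assms(3) by auto
  next
    case False
    obtain x where "x2 \<le> x" "x \<le> x1" "g x - x = 0"
      using IVT2'[of "\<lambda>x. g x - x" x1 0 x2] c x1 x2 False by force
    moreover have "x \<in> I" using assms(2) x1 x2 calculation unfolding conv_def by blast
    ultimately show False using assms(3) by auto
  qed
qed

lemma CORE:
  assumes "tp a" "tp b" "PR a b" "conv I" "invs a I" "invs b I" "\<forall>x\<in>I. b x \<noteq> x" "x0 \<in> I"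
  shows "\<exists>lo\<in>I. \<exists>hi\<in>I. (\<forall>x\<in>I. x \<le> lo \<longrightarrow> a x < x) \<and> (\<forall>x\<in>I. hi \<le> x \<longrightarrow> x < a x)"
proof -
  have ib: "tp (inv b)" using assms(2) by (rule tp_inv)
  have ipr: "PR a (inv b)" using assms(1-3) by (rule PR_inv)
  have iinv: "invs (inv b) I" using assms(2,6) by (rule invs_inv)
  from DICH[OF assms(2,4,7)] show ?thesis
  proof
    assume up: "\<forall>x\<in>I. x < b x"
    have dn: "\<forall>x\<in>I. inv b x < x"
    proof
      fix x assume "x \<in> I"
      hence "inv b x \<in> I" using iinv unfolding invs_def by blast
      hence "inv b x < b (inv b x)" using up by blast
      thus "inv b x < x" using tp_f_inv[OF assms(2)] by simp
    qed
    show ?thesis using CORE_HI[OF assms(1,2,3,4,5,6) up assms(8)] CORE_LO[OF assms(1) ib ipr assms(4,5) iinv dn assms(8)]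
      by blast
  next
    assume dn: "\<forall>x\<in>I. b x < x"
    have up: "\<forall>x\<in>I. x < inv b x"
    proof
      fix x assume "x \<in> I"
      hence "inv b x \<in> I" using iinv unfolding invs_def by blast
      hence "b (inv b x) < inv b x" using dn by blast
      thus "x < inv b x" using tp_f_inv[OF assms(2)] by simp
    qed
    show ?thesis using CORE_LO[OF assms(1,2,3,4,5,6) dn assms(8)] CORE_HI[OF assms(1) ib ipr assms(4,5) iinv up assms(8)]
      by blast
  qed
qed

lemma CORE_FIX:
  assumes "tp a" "conv I" "lo \<in> I" "hi \<in> I" "\<forall>x\<in>I. x \<le> lo \<longrightarrow> a x < x" "\<forall>x\<in>I. hi \<le> x \<longrightarrow> x < a x"
  shows "\<exists>u\<in>I. a u = u"
proof -
  have "lo < hi"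
  proof (rule ccontr)
    assume "\<not> lo < hi"
    hence "hi \<le> lo" by simp
    have "a hi < hi" using assms(5) assms(4) \<open>hi \<le> lo\<close> by blast
    moreover have "hi < a hi" using assms(6) assms(4) by blast
    ultimately show False by simp
  qed
  have c: "continuous_on S (\<lambda>x. a x - x)" for S
    by (intro continuous_intros tp_cont_on[OF assms(1)])
  obtain x where "lo \<le> x" "x \<le> hi" "a x - x = 0"
    using IVT'[of "\<lambda>x. a x - x" lo 0 hi] c assms(3-6) \<open>lo < hi\<close> by force
  moreover have "x \<in> I" using assms(2,3,4) calculation unfolding conv_def by blast
  ultimately show ?thesis by auto
qed

lemma closed_fix: "tp a \<Longrightarrow> closed {y. a y = y}"
proof -
  assume "tp a"
  hence "continuous_on UNIV a" by (rule tp_cont_on)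
  thus ?thesis using closed_Collect_eq[OF _ continuous_on_id] by blast
qed

lemma MAXEX2:
  assumes "tp a" "conv I" "u \<in> I" "a u = u" "x \<in> I" "\<forall>y\<in>I. a y = y \<longrightarrow> y \<le> x"
  shows "\<exists>s\<in>I. a s = s \<and> u \<le> s \<and> (\<forall>y\<in>I. a y = y \<longrightarrow> y \<le> s)"
proof -
  define S where "S = {y. a y = y} \<inter> {u..x}"
  have ux: "u \<le> x" using assms by blast
  have cS: "closed S" unfolding S_def using closed_fix[OF assms(1)] by (simp add: closed_Int)
  have nS: "S \<noteq> {}" using ux assms(4) unfolding S_def by auto
  have bS: "bdd_above S" by (rule bdd_aboveI[where M=x]) (simp add: S_def)
  have sS: "Sup S \<in> S" using closed_contains_Sup[OF nS bS cS] .
  have sI: "Sup S \<in> I"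
  proof -
    have "u \<le> Sup S" "Sup S \<le> x" using sS unfolding S_def by auto
    thus ?thesis using assms(2,3,5) unfolding conv_def by blast
  qed
  show ?thesis
  proof (intro bexI[OF _ sI] conjI ballI impI)
    show "a (Sup S) = Sup S" using sS unfolding S_def by auto
    show "u \<le> Sup S" using sS unfolding S_def by auto
    fix y assume "y \<in> I" "a y = y"
    show "y \<le> Sup S"
    proof (cases "u \<le> y")
      case True
      hence "y \<in> S" unfolding S_def using assms(6) \<open>y \<in> I\<close> \<open>a y = y\<close> by auto
      thus ?thesis using bS by (simp add: cSup_upper)
    next
      case False thus ?thesis using \<open>u \<le> Sup S\<close> by linarith
    qed
  qed
qed

lemma MINEX2:
  assumes "tp a" "conv I" "u \<in> I" "a u = u" "x \<in> I" "\<forall>y\<in>I. a y = y \<longrightarrow> x \<le> y"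
  shows "\<exists>s\<in>I. a s = s \<and> s \<le> u \<and> (\<forall>y\<in>I. a y = y \<longrightarrow> s \<le> y)"
proof -
  define S where "S = {y. a y = y} \<inter> {x..u}"
  have ux: "x \<le> u" using assms by blast
  have cS: "closed S" unfolding S_def using closed_fix[OF assms(1)] by (simp add: closed_Int)
  have nS: "S \<noteq> {}" using ux assms(4) unfolding S_def by auto
  have bS: "bdd_below S" by (rule bdd_belowI[where m=x]) (simp add: S_def)
  have sS: "Inf S \<in> S" using closed_contains_Inf[OF nS bS cS] .
  have sI: "Inf S \<in> I"
  proof -
    have "x \<le> Inf S" "Inf S \<le> u" using sS unfolding S_def by auto
    thus ?thesis using assms(2,3,5) unfolding conv_def by blast
  qed
  show ?thesis
  proof (intro bexI[OF _ sI] conjI ballI impI)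
    show "a (Inf S) = Inf S" using sS unfolding S_def by auto
    show "Inf S \<le> u" using sS unfolding S_def by auto
    fix y assume "y \<in> I" "a y = y"
    show "Inf S \<le> y"
    proof (cases "y \<le> u")
      case True
      hence "y \<in> S" unfolding S_def using assms(6) \<open>y \<in> I\<close> \<open>a y = y\<close> by auto
      thus ?thesis using bS by (simp add: cInf_lower)
    next
      case False thus ?thesis using \<open>Inf S \<le> u\<close> by linarith
    qed
  qed
qed

lemma fix_max_pres:
  assumes "tp a" "tp b" "PR a b" "invs a I" "s \<in> I" "b s = s" "\<forall>x\<in>I. b x = x \<longrightarrow> x \<le> s"
  shows "a s = s"
proof -
  have "b (a s) = a s" using PR_fix assms by blast
  moreover have "a s \<in> I" using assms(4,5) unfolding invs_def by blast
  ultimately have 1: "a s \<le> s" using assms(7) by blast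
  have "b (inv a s) = inv a s" using PR_fix_inv assms by blast
  moreover have "inv a s \<in> I" using invs_inv[OF assms(1,4)] assms(5) unfolding invs_def by blast
  ultimately have "inv a s \<le> s" using assms(7) by blast
  hence "a (inv a s) \<le> a s" using assms(1) tp_le by blast
  hence "s \<le> a s" using tp_f_inv[OF assms(1)] by simp
  thus ?thesis using 1 by simp
qed

lemma fix_min_pres:
  assumes "tp a" "tp b" "PR a b" "invs a I" "s \<in> I" "b s = s" "\<forall>x\<in>I. b x = x \<longrightarrow> s \<le> x"
  shows "a s = s"
proof -
  have "b (a s) = a s" using PR_fix assms by blast
  moreover have "a s \<in> I" using assms(4,5) unfolding invs_def by blast
  ultimately have 1: "s \<le> a s" using assms(7) by blast
  have "b (inv a s) = inv a s" using PR_fix_inv assms by blast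
  moreover have "inv a s \<in> I" using invs_inv[OF assms(1,4)] assms(5) unfolding invs_def by blast
  ultimately have "s \<le> inv a s" using assms(7) by blast
  hence "a s \<le> a (inv a s)" using assms(1) tp_le by blast
  hence "a s \<le> s" using tp_f_inv[OF assms(1)] by simp
  thus ?thesis using 1 by simp
qed

lemma CM:
  assumes "tp a" "tp b" "PR a b" "conv I" "\<forall>x\<in>I. \<exists>y\<in>I. x < y" "invs a I" "invs b I"
    "s \<in> I" "b s = s" "\<forall>x\<in>I. b x = x \<longrightarrow> x \<le> s"
  shows "\<exists>s'\<in>I. a s' = s' \<and> s < s' \<and> (\<forall>x\<in>I. a x = x \<longrightarrow> x \<le> s')"
proof -
  have as: "a s = s" using fix_max_pres[OF assms(1,2,3,6,8,9,10)] .
  define J where "J = {x\<in>I. s < x}"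
  have cJ: "conv J" unfolding conv_def
  proof (intro allI impI)
    fix x y v assume "x \<in> J" "y \<in> J" "x \<le> v" "v \<le> y"
    hence "x \<in> I" "y \<in> I" "s < x" unfolding J_def by simp_all
    hence "v \<in> I" "s < v" using assms(4) \<open>x \<le> v\<close> \<open>v \<le> y\<close> unfolding conv_def by (blast, linarith)
    thus "v \<in> J" unfolding J_def by blast
  qed
  have iaJ: "invs a J" unfolding invs_def
  proof
    fix x
    have 1: "a x \<in> I \<longleftrightarrow> x \<in> I" using assms(6) unfolding invs_def by blast
    have 2: "s < a x \<longleftrightarrow> s < x" using tp_less[OF assms(1), of s x] as by simp
    show "a x \<in> J \<longleftrightarrow> x \<in> J" unfolding J_def using 1 2 by blast
  qed
  have ibJ: "invs b J" unfolding invs_def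
  proof
    fix x
    have 1: "b x \<in> I \<longleftrightarrow> x \<in> I" using assms(7) unfolding invs_def by blast
    have 2: "s < b x \<longleftrightarrow> s < x" using tp_less[OF assms(2), of s x] assms(9) by simp
    show "b x \<in> J \<longleftrightarrow> x \<in> J" unfolding J_def using 1 2 by blast
  qed
  have fJ: "\<forall>x\<in>J. b x \<noteq> x"
  proof
    fix x assume "x \<in> J"
    hence xI: "x \<in> I" and xs: "s < x" unfolding J_def by auto
    show "b x \<noteq> x"
    proof
      assume "b x = x"
      hence "x \<le> s" using assms(10) xI by blast
      thus False using xs by simp
    qed
  qed
  obtain x0 where "x0 \<in> I" "s < x0" using assms(5,8) by blast
  hence x0: "x0 \<in> J" unfolding J_def by blast
  obtain lo hi where lh: "lo \<in> J" "hi \<in> J" "\<forall>x\<in>J. x \<le> lo \<longrightarrow> a x < x" "\<forall>x\<in>J. hi \<le> x \<longrightarrow> x < a x"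
    using CORE[OF assms(1,2,3) cJ iaJ ibJ fJ x0] by blast
  obtain u where u: "u \<in> J" "a u = u" using CORE_FIX[OF assms(1) cJ lh] by blast
  have bnd: "\<forall>y\<in>I. a y = y \<longrightarrow> y \<le> hi"
  proof (intro ballI impI)
    fix y assume "y \<in> I" "a y = y"
    show "y \<le> hi"
    proof (cases "s < y")
      case True
      hence "y \<in> J" using \<open>y \<in> I\<close> unfolding J_def by blast
      show ?thesis
      proof (rule ccontr)
        assume "\<not> y \<le> hi"
        hence "y < a y" using lh(4) \<open>y \<in> J\<close> by simp
        thus False using \<open>a y = y\<close> by simp
      qed
    next
      case False thus ?thesis using lh(2) unfolding J_def by simp
    qed
  qed
  have "u \<in> I" "s < u" using u(1) unfolding J_def by simp_all
  have "hi \<in> I" using lh(2) unfolding J_def by simp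
  obtain s' where "s' \<in> I" "a s' = s'" "u \<le> s'" "\<forall>y\<in>I. a y = y \<longrightarrow> y \<le> s'"
    using MAXEX2[OF assms(1,4) \<open>u \<in> I\<close> u(2) \<open>hi \<in> I\<close> bnd] by blast
  moreover have "s < s'" using \<open>s < u\<close> calculation(3) by linarith
  ultimately show ?thesis by blast
qed

lemma CM_min:
  assumes "tp a" "tp b" "PR a b" "conv I" "\<forall>x\<in>I. \<exists>y\<in>I. y < x" "invs a I" "invs b I"
    "s \<in> I" "b s = s" "\<forall>x\<in>I. b x = x \<longrightarrow> s \<le> x"
  shows "\<exists>s'\<in>I. a s' = s' \<and> s' < s \<and> (\<forall>x\<in>I. a x = x \<longrightarrow> s' \<le> x)"
proof -
  have as: "a s = s" using fix_min_pres[OF assms(1,2,3,6,8,9,10)] .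
  define J where "J = {x\<in>I. x < s}"
  have cJ: "conv J" unfolding conv_def
  proof (intro allI impI)
    fix x y v assume "x \<in> J" "y \<in> J" "x \<le> v" "v \<le> y"
    hence "x \<in> I" "y \<in> I" "y < s" unfolding J_def by simp_all
    hence "v \<in> I" "v < s" using assms(4) \<open>x \<le> v\<close> \<open>v \<le> y\<close> unfolding conv_def by (blast, linarith)
    thus "v \<in> J" unfolding J_def by blast
  qed
  have iaJ: "invs a J" unfolding invs_def
  proof
    fix x
    have 1: "a x \<in> I \<longleftrightarrow> x \<in> I" using assms(6) unfolding invs_def by blast
    have 2: "a x < s \<longleftrightarrow> x < s" using tp_less[OF assms(1), of x s] as by simp
    show "a x \<in> J \<longleftrightarrow> x \<in> J" unfolding J_def using 1 2 by blast
  qed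
  have ibJ: "invs b J" unfolding invs_def
  proof
    fix x
    have 1: "b x \<in> I \<longleftrightarrow> x \<in> I" using assms(7) unfolding invs_def by blast
    have 2: "b x < s \<longleftrightarrow> x < s" using tp_less[OF assms(2), of x s] assms(9) by simp
    show "b x \<in> J \<longleftrightarrow> x \<in> J" unfolding J_def using 1 2 by blast
  qed
  have fJ: "\<forall>x\<in>J. b x \<noteq> x"
  proof
    fix x assume "x \<in> J"
    hence xI: "x \<in> I" and xs: "x < s" unfolding J_def by auto
    show "b x \<noteq> x"
    proof
      assume "b x = x"
      hence "s \<le> x" using assms(10) xI by blast
      thus False using xs by simp
    qed
  qed
  obtain x0 where "x0 \<in> I" "x0 < s" using assms(5,8) by blast
  hence x0: "x0 \<in> J" unfolding J_def by blast
  obtain lo hi where lh: "lo \<in> J" "hi \<in> J" "\<forall>x\<in>J. x \<le> lo \<longrightarrow> a x < x" "\<forall>x\<in>J. hi \<le> x \<longrightarrow> x < a x"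
    using CORE[OF assms(1,2,3) cJ iaJ ibJ fJ x0] by blast
  obtain u where u: "u \<in> J" "a u = u" using CORE_FIX[OF assms(1) cJ lh] by blast
  have bnd: "\<forall>y\<in>I. a y = y \<longrightarrow> lo \<le> y"
  proof (intro ballI impI)
    fix y assume "y \<in> I" "a y = y"
    show "lo \<le> y"
    proof (cases "y < s")
      case True
      hence "y \<in> J" using \<open>y \<in> I\<close> unfolding J_def by blast
      show ?thesis
      proof (rule ccontr)
        assume "\<not> lo \<le> y"
        hence "a y < y" using lh(3) \<open>y \<in> J\<close> by simp
        thus False using \<open>a y = y\<close> by simp
      qed
    next
      case False thus ?thesis using lh(1) unfolding J_def by simp
    qed
  qed
  have "u \<in> I" "u < s" using u(1) unfolding J_def by simp_all
  have "lo \<in> I" using lh(1) unfolding J_def by simp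
  obtain s' where "s' \<in> I" "a s' = s'" "s' \<le> u" "\<forall>y\<in>I. a y = y \<longrightarrow> s' \<le> y"
    using MINEX2[OF assms(1,4) \<open>u \<in> I\<close> u(2) \<open>lo \<in> I\<close> bnd] by blast
  moreover have "s' < s" using \<open>u < s\<close> calculation(3) by linarith
  ultimately show ?thesis by blast
qed


definition cyc :: "(real \<Rightarrow> real) \<Rightarrow> (real \<Rightarrow> real) \<Rightarrow> (real \<Rightarrow> real) \<Rightarrow> (real \<Rightarrow> real) \<Rightarrow> bool" where
  "cyc f0 f1 f2 f3 \<longleftrightarrow> tp f0 \<and> tp f1 \<and> tp f2 \<and> tp f3 \<and> PR f0 f1 \<and> PR f1 f2 \<and> PR f2 f3 \<and> PR f3 f0"

definition ivl :: "real set \<Rightarrow> (real \<Rightarrow> real) \<Rightarrow> (real \<Rightarrow> real) \<Rightarrow> (real \<Rightarrow> real) \<Rightarrow> (real \<Rightarrow> real) \<Rightarrow> bool" where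
  "ivl I f0 f1 f2 f3 \<longleftrightarrow> conv I \<and> (\<forall>x\<in>I. \<exists>y\<in>I. x < y) \<and> (\<forall>x\<in>I. \<exists>y\<in>I. y < x) \<and> I \<noteq> {}
     \<and> invs f0 I \<and> invs f1 I \<and> invs f2 I \<and> invs f3 I"

lemma cyc_rot: "cyc f0 f1 f2 f3 \<Longrightarrow> cyc f1 f2 f3 f0"
  unfolding cyc_def by blast

lemma ivl_rot: "ivl I f0 f1 f2 f3 \<Longrightarrow> ivl I f1 f2 f3 f0"
  unfolding ivl_def by blast

lemma BA:
  assumes c: "cyc f0 f1 f2 f3" and i: "ivl I f0 f1 f2 f3"
    and s: "s \<in> I" "f1 s = s" "\<forall>x\<in>I. f1 x = x \<longrightarrow> x \<le> s"
  shows False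
proof -
  note C = c[unfolded cyc_def] and V = i[unfolded ivl_def]
  obtain s0 where s0: "s0 \<in> I" "f0 s0 = s0" "s < s0" "\<forall>x\<in>I. f0 x = x \<longrightarrow> x \<le> s0"
    using CM[of f0 f1 I s] C V s by blast
  obtain s3 where s3: "s3 \<in> I" "f3 s3 = s3" "s0 < s3" "\<forall>x\<in>I. f3 x = x \<longrightarrow> x \<le> s3"
    using CM[of f3 f0 I s0] C V s0 by blast
  obtain s2 where s2: "s2 \<in> I" "f2 s2 = s2" "s3 < s2" "\<forall>x\<in>I. f2 x = x \<longrightarrow> x \<le> s2"
    using CM[of f2 f3 I s3] C V s3 by blast
  obtain s1 where s1: "s1 \<in> I" "f1 s1 = s1" "s2 < s1" "\<forall>x\<in>I. f1 x = x \<longrightarrow> x \<le> s1"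
    using CM[of f1 f2 I s2] C V s2 by blast
  have "s1 \<le> s" using s(3) s1(1,2) by blast
  thus False using s0(3) s3(3) s2(3) s1(3) by linarith
qed

lemma BB:
  assumes c: "cyc f0 f1 f2 f3" and i: "ivl I f0 f1 f2 f3"
    and s: "s \<in> I" "f1 s = s" "\<forall>x\<in>I. f1 x = x \<longrightarrow> s \<le> x"
  shows False
proof -
  note C = c[unfolded cyc_def] and V = i[unfolded ivl_def]
  obtain s0 where s0: "s0 \<in> I" "f0 s0 = s0" "s0 < s" "\<forall>x\<in>I. f0 x = x \<longrightarrow> s0 \<le> x"
    using CM_min[of f0 f1 I s] C V s by blast
  obtain s3 where s3: "s3 \<in> I" "f3 s3 = s3" "s3 < s0" "\<forall>x\<in>I. f3 x = x \<longrightarrow> s3 \<le> x"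
    using CM_min[of f3 f0 I s0] C V s0 by blast
  obtain s2 where s2: "s2 \<in> I" "f2 s2 = s2" "s2 < s3" "\<forall>x\<in>I. f2 x = x \<longrightarrow> s2 \<le> x"
    using CM_min[of f2 f3 I s3] C V s3 by blast
  obtain s1 where s1: "s1 \<in> I" "f1 s1 = s1" "s1 < s2" "\<forall>x\<in>I. f1 x = x \<longrightarrow> s1 \<le> x"
    using CM_min[of f1 f2 I s2] C V s2 by blast
  have "s \<le> s1" using s(3) s1(1,2) by blast
  thus False using s0(3) s3(3) s2(3) s1(3) by linarith
qed

lemma NONEMPTY:
  assumes c: "cyc f0 f1 f2 f3" and i: "ivl I f0 f1 f2 f3"
  shows "\<exists>u\<in>I. f1 u = u"
proof (rule ccontr)
  assume "\<not> ?thesis"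
  hence fr: "\<forall>x\<in>I. f1 x \<noteq> x" by blast
  note C = c[unfolded cyc_def] and V = i[unfolded ivl_def]
  obtain x0 where x0: "x0 \<in> I" using V by blast
  obtain lo hi where lh: "lo \<in> I" "hi \<in> I" "\<forall>x\<in>I. x \<le> lo \<longrightarrow> f0 x < x" "\<forall>x\<in>I. hi \<le> x \<longrightarrow> x < f0 x"
    using CORE[of f0 f1 I x0] C V fr x0 by blast
  obtain u where u: "u \<in> I" "f0 u = u" using CORE_FIX[of f0 I lo hi] C V lh by blast
  have bnd: "\<forall>y\<in>I. f0 y = y \<longrightarrow> y \<le> hi"
  proof (intro ballI impI)
    fix y assume "y \<in> I" "f0 y = y"
    show "y \<le> hi"
    proof (rule ccontr)
      assume "\<not> y \<le> hi"
      hence "y < f0 y" using lh(4) \<open>y \<in> I\<close> by simp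
      thus False using \<open>f0 y = y\<close> by simp
    qed
  qed
  obtain s where "s \<in> I" "f0 s = s" "\<forall>y\<in>I. f0 y = y \<longrightarrow> y \<le> s"
    using MAXEX2[of f0 I u hi] C V u lh(2) bnd by blast
  moreover have "cyc f3 f0 f1 f2" using cyc_rot[OF cyc_rot[OF cyc_rot[OF c]]] .
  moreover have "ivl I f3 f0 f1 f2" using ivl_rot[OF ivl_rot[OF ivl_rot[OF i]]] .
  ultimately show False using BA[of f3 f0 f1 f2 I s] by blast
qed

lemma COF:
  assumes c: "cyc f0 f1 f2 f3" and i: "ivl I f0 f1 f2 f3"
  shows "(\<forall>x\<in>I. \<exists>y\<in>I. f1 y = y \<and> x \<le> y) \<and> (\<forall>x\<in>I. \<exists>y\<in>I. f1 y = y \<and> y \<le> x)"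
proof -
  note C = c[unfolded cyc_def] and V = i[unfolded ivl_def]
  obtain u where u: "u \<in> I" "f1 u = u" using NONEMPTY[OF c i] by blast
  have 1: "\<forall>x\<in>I. \<exists>y\<in>I. f1 y = y \<and> x \<le> y"
  proof (rule ccontr)
    assume "\<not> ?thesis"
    then obtain x where x: "x \<in> I" "\<forall>y\<in>I. f1 y = y \<longrightarrow> y \<le> x" by (meson linorder_le_cases)
    obtain s where "s \<in> I" "f1 s = s" "\<forall>y\<in>I. f1 y = y \<longrightarrow> y \<le> s"
      using MAXEX2[of f1 I u x] C V u x by blast
    thus False using BA[OF c i] by blast
  qed
  have 2: "\<forall>x\<in>I. \<exists>y\<in>I. f1 y = y \<and> y \<le> x"
  proof (rule ccontr)
    assume "\<not> ?thesis"
    then obtain x where x: "x \<in> I" "\<forall>y\<in>I. f1 y = y \<longrightarrow> x \<le> y" by (meson linorder_le_cases)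
    obtain s where "s \<in> I" "f1 s = s" "\<forall>y\<in>I. f1 y = y \<longrightarrow> s \<le> y"
      using MINEX2[of f1 I u x] C V u x by blast
    thus False using BB[OF c i] by blast
  qed
  show ?thesis using 1 2 by blast
qed


lemma bb_fix:
  assumes "tp b" "b (b y) = y" shows "b y = y"
proof (rule ccontr)
  assume "b y \<noteq> y"
  hence "b y < y \<or> y < b y" by linarith
  thus False
  proof
    assume h: "b y < y"
    hence "b (b y) < b y" using assms(1) tp_less by blast
    thus False using h assms(2) by linarith
  next
    assume h: "y < b y"
    hence "b y < b (b y)" using assms(1) tp_less by blast
    thus False using h assms(2) by linarith
  qed
qed

lemma contD:
  fixes f :: "real \<Rightarrow> real"
  assumes "isCont f q" "0 < e" shows "\<exists>d>0. \<forall>t. \<bar>t - q\<bar> < d \<longrightarrow> \<bar>f t - f q\<bar> < e"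
proof -
  have "f \<midarrow>q\<rightarrow> f q" using assms(1) by (simp add: isCont_def)
  then obtain s where s: "s > 0" "\<forall>x. x \<noteq> q \<and> norm (x - q) < s \<longrightarrow> norm (f x - f q) < e"
    using assms(2) unfolding LIM_eq by blast
  show ?thesis
  proof (intro exI[of _ s] conjI allI impI)
    show "0 < s" by fact
    fix t assume "\<bar>t - q\<bar> < s"
    thus "\<bar>f t - f q\<bar> < e" using s(2) assms(2) by (cases "t = q") auto
  qed
qed

lemma MVTg:
  assumes "\<forall>t. (f has_real_derivative f' t) (at t)"
  shows "\<exists>z. min x y \<le> z \<and> z \<le> max x y \<and> f y - f x = (y - x) * f' z"
proof (cases x y rule: linorder_cases)
  case less
  then obtain z where "x < z" "z < y" "f y - f x = (y - x) * f' z" using MVT2[of x y f f'] assms by blast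
  thus ?thesis by (intro exI[of _ z]) auto
next
  case equal thus ?thesis by (intro exI[of _ x]) auto
next
  case greater
  then obtain z where "y < z" "z < x" "f x - f y = (x - y) * f' z" using MVT2[of y x f f'] assms by blast
  moreover have "f y - f x = (y - x) * f' z" using calculation(3) by (simp add: algebra_simps)
  ultimately show ?thesis by (intro exI[of _ z]) auto
qed

lemma btw:
  fixes x y z q d :: real
  assumes "\<bar>x - q\<bar> < d" "\<bar>y - q\<bar> < d" "min x y \<le> z" "z \<le> max x y"
  shows "\<bar>z - q\<bar> < d"
  using assms unfolding abs_less_iff min_def max_def by (auto split: if_splits)

lemma LEMMA_D:
  fixes a b a' b' :: "real \<Rightarrow> real" and u :: "nat \<Rightarrow> real"
  assumes ta: "tp a" and tb: "tp b" and pr: "PR a b"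
    and da: "\<forall>x. (a has_real_derivative a' x) (at x)" and ca: "isCont a' q" and pa: "a' q > 0"
    and db: "\<forall>x. (b has_real_derivative b' x) (at x)" and cb: "isCont b' q" and pb: "b' q > 0"
    and aq: "a q = q" and bq: "b q = q" and us: "\<forall>n. a (u (Suc n)) = u n" and ul: "u \<longlonglongrightarrow> q"
    and u0: "b (u 0) \<noteq> u 0"
  shows False
proof -
  define A where "A = a' q"
  define B where "B = b' q"
  have nf: "b (u n) \<noteq> u n" for n
  proof (induction n)
    case 0 show ?case using u0 .
  next
    case (Suc n)
    show ?case
    proof
      assume h: "b (u (Suc n)) = u (Suc n)"
      have "a (b (u (Suc n))) = b (b (a (u (Suc n))))" using pr unfolding PR_def by blast
      hence "u n = b (b (u n))" using h us by simp
      hence "b (u n) = u n" using bb_fix[OF tb] by simp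
      thus False using Suc by simp
    qed
  qed
  have nq: "u n \<noteq> q" for n using nf[of n] bq by auto
  define k where "k = (4 + B) / (4 + 2 * B)"
  have Bp: "B > 0" using pb B_def by simp
  have Ap: "A > 0" using pa A_def by simp
  have k0: "0 < k" unfolding k_def using Bp by simp
  have k1: "k < 1" unfolding k_def using Bp by simp
  define e where "e = A * (1 - k) / 2"
  have e0: "0 < e" unfolding e_def using Ap k1 by simp
  have eA: "e < A" unfolding e_def using Ap k0 k1 by simp
  obtain d1 where d1: "d1 > 0" "\<forall>t. \<bar>t - q\<bar> < d1 \<longrightarrow> \<bar>a' t - A\<bar> < e"
    using contD[OF ca e0] A_def by blast
  have B2: "0 < B / 2" using Bp by simp
  obtain d2 where d2: "d2 > 0" "\<forall>t. \<bar>t - q\<bar> < d2 \<longrightarrow> \<bar>b' t - B\<bar> < B / 2"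
    using contD[OF cb B2] B_def by blast
  define d where "d = min d1 d2"
  have d0: "d > 0" using d1 d2 d_def by simp
  have apos: "a' t > 0" if "\<bar>t - q\<bar> < d" for t
  proof -
    have "\<bar>a' t - A\<bar> < e" using d1(2) that d_def by simp
    thus ?thesis using eA by linarith
  qed
  have ka: "k * a' t \<le> a' s" if "\<bar>s - q\<bar> < d" "\<bar>t - q\<bar> < d" for s t
  proof -
    have "\<bar>a' s - A\<bar> < e" using d1(2) that(1) d_def by simp
    hence hs: "A - e < a' s" by (simp add: abs_less_iff)
    have "\<bar>a' t - A\<bar> < e" using d1(2) that(2) d_def by simp
    hence ht: "a' t < A + e" by (simp add: abs_less_iff)
    have "k * a' t \<le> k * (A + e)" using ht k0 by simp
    moreover have "A - e - k * (A + e) = A * (1 - k)^2 / 2"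
      unfolding e_def by (simp add: field_simps power2_eq_square)
    moreover have "A * (1 - k)^2 / 2 \<ge> 0" using Ap by simp
    ultimately show ?thesis using hs by linarith
  qed
  have kb: "B / 2 < b' t \<and> b' t < 3 * B / 2" if "\<bar>t - q\<bar> < d" for t
  proof -
    have "\<bar>b' t - B\<bar> < B / 2" using d2(2) that d_def by simp
    thus ?thesis unfolding abs_less_iff by linarith
  qed
  have Qk: "(1 + B / 2) * k = 1 + B / 4" unfolding k_def using Bp by (simp add: field_simps)
  have bul: "(\<lambda>n. b (u n)) \<longlonglongrightarrow> q" using isCont_tendsto_compose[OF tp_isCont[OF tb] ul] bq by simp
  obtain N1 where N1: "\<forall>n\<ge>N1. norm (u n - q) < d" using ul d0 unfolding LIMSEQ_iff by blast
  obtain N2 where N2: "\<forall>n\<ge>N2. norm (b (u n) - q) < d" using bul d0 unfolding LIMSEQ_iff by blast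
  define N where "N = max N1 N2"
  have close: "\<bar>u n - q\<bar> < d \<and> \<bar>b (u n) - q\<bar> < d" if "n \<ge> N" for n
    using N1 N2 that N_def by simp
  define r where "r n = \<bar>b (u n) - u n\<bar> / \<bar>u n - q\<bar>" for n
  have rpos: "0 < r n" for n using nf[of n] nq[of n] r_def by simp
  have rbd: "r n \<le> 3 * B / 2 + 1" if "n \<ge> N" for n
  proof -
    obtain z where z: "min q (u n) \<le> z" "z \<le> max q (u n)" "b (u n) - b q = (u n - q) * b' z"
      using MVTg[OF db, of q "u n"] by blast
    have zq: "\<bar>z - q\<bar> < d" using btw[of q q d "u n" z] close[OF that] d0 z by simp
    have "b (u n) - u n = (u n - q) * (b' z - 1)" using z(3) bq by (simp add: algebra_simps)
    hence "\<bar>b (u n) - u n\<bar> = \<bar>u n - q\<bar> * \<bar>b' z - 1\<bar>" by (simp add: abs_mult)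
    moreover have "\<bar>b' z - 1\<bar> \<le> 3 * B / 2 + 1" using kb[OF zq] by (simp add: abs_le_iff)
    ultimately have "\<bar>b (u n) - u n\<bar> \<le> \<bar>u n - q\<bar> * (3 * B / 2 + 1)"
      by (simp add: mult_left_mono)
    thus ?thesis unfolding r_def using nq[of n] by (simp add: divide_le_eq mult.commute)
  qed
  have rgr: "(1 + B / 4) * r n \<le> r (Suc n)" if "n \<ge> N" for n
  proof -
    define U where "U = u n"
    define D where "D = u (Suc n)"
    have aD: "a D = U" using us U_def D_def by simp
    have abD: "a (b D) = b (b U)" using pr aD unfolding PR_def by metis
    have cU: "\<bar>U - q\<bar> < d" "\<bar>b U - q\<bar> < d" using close[OF that] U_def by auto
    have cD: "\<bar>D - q\<bar> < d" "\<bar>b D - q\<bar> < d" using close[of "Suc n"] that D_def by auto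
    obtain xi where xi: "min D (b D) \<le> xi" "xi \<le> max D (b D)" "a (b D) - a D = (b D - D) * a' xi"
      using MVTg[OF da, of D "b D"] by blast
    obtain eta where eta: "min U (b U) \<le> eta" "eta \<le> max U (b U)" "b (b U) - b U = (b U - U) * b' eta"
      using MVTg[OF db, of U "b U"] by blast
    obtain ze where ze: "min q D \<le> ze" "ze \<le> max q D" "a D - a q = (D - q) * a' ze"
      using MVTg[OF da, of q D] by blast
    have xiq: "\<bar>xi - q\<bar> < d" using btw[OF cD(1) cD(2) xi(1,2)] .
    have etaq: "\<bar>eta - q\<bar> < d" using btw[OF cU(1) cU(2) eta(1,2)] .
    have zeq: "\<bar>ze - q\<bar> < d" using btw[of q q d D ze] d0 cD(1) ze(1,2) by simp
    define X where "X = b U - U"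
    define Y where "Y = D - q"
    define P where "P = a' xi"
    define Z where "Z = a' ze"
    define H where "H = 1 + b' eta"
    have P0: "P > 0" using apos[OF xiq] P_def by simp
    have Z0: "Z > 0" using apos[OF zeq] Z_def by simp
    have H1: "H \<ge> 1 + B / 2" using kb[OF etaq] H_def by simp
    have kZP: "k * P \<le> Z" using ka[OF zeq xiq] P_def Z_def by simp
    have X0: "X \<noteq> 0" using nf[of n] X_def U_def by simp
    have Y0: "Y \<noteq> 0" using nq[of "Suc n"] Y_def D_def by simp
    have e1: "(b D - D) * P = X * H"
      using xi(3) abD aD eta(3) unfolding X_def H_def P_def by (simp add: algebra_simps)
    have e2: "U - q = Y * Z" using ze(3) aD aq unfolding Y_def Z_def by simp
    have rn: "r n = \<bar>X\<bar> / (\<bar>Y\<bar> * Z)" unfolding r_def X_def using e2 U_def Z0 by (simp add: abs_mult)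
    have bDD: "b D - D = X * H / P" using e1 P0 by (simp add: field_simps)
    have rs: "r (Suc n) = \<bar>X\<bar> * H / (P * \<bar>Y\<bar>)"
    proof -
      have "H > 0" using H1 Bp by simp
      hence "\<bar>b D - D\<bar> = \<bar>X\<bar> * H / P" using bDD P0 by (simp add: abs_mult abs_divide)
      thus ?thesis unfolding r_def D_def[symmetric] Y_def by simp
    qed
    have "r n * (H * Z / P) = \<bar>X\<bar> / (\<bar>Y\<bar> * Z) * (H * Z / P)" using rn by simp
    also have "\<dots> = \<bar>X\<bar> * H / (P * \<bar>Y\<bar>)" using Y0 Z0 P0 by (simp add: field_simps)
    also have "\<dots> = r (Suc n)" using rs by simp
    finally have "r (Suc n) = r n * (H * Z / P)" by simp
    moreover have "H * Z / P \<ge> 1 + B / 4"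
    proof -
      have "(1 + B / 2) * (k * P) \<le> H * Z"
      proof (rule mult_mono[OF H1 kZP])
        show "0 \<le> H" using H1 Bp by simp
        show "0 \<le> k * P" using k0 P0 by simp
      qed
      hence "(1 + B / 4) * P \<le> H * Z" using Qk by (simp add: mult.assoc[symmetric])
      thus ?thesis using P0 by (simp add: le_divide_eq)
    qed
    ultimately show ?thesis using rpos[of n] mult_left_mono[of "1 + B / 4" "H * Z / P" "r n"]
      by (simp add: mult.commute)
  qed
  have grow: "(1 + B / 4) ^ j * r N \<le> r (N + j)" for j
  proof (induction j)
    case 0 show ?case by simp
  next
    case (Suc j)
    have "(1 + B / 4) ^ Suc j * r N = (1 + B / 4) * ((1 + B / 4) ^ j * r N)" by simp
    also have "\<dots> \<le> (1 + B / 4) * r (N + j)" using Suc Bp by (simp add: mult_left_mono)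
    also have "\<dots> \<le> r (Suc (N + j))" using rgr[of "N + j"] by simp
    finally show ?case by simp
  qed
  have "1 < 1 + B / 4" using Bp by simp
  then obtain j where j: "(3 * B / 2 + 1) / r N < (1 + B / 4) ^ j" using real_arch_pow by blast
  hence "3 * B / 2 + 1 < (1 + B / 4) ^ j * r N" using rpos[of N] by (simp add: divide_less_eq)
  also have "\<dots> \<le> r (N + j)" by (rule grow)
  also have "\<dots> \<le> 3 * B / 2 + 1" using rbd by simp
  finally show False by simp
qed


definition dp :: "(real \<Rightarrow> real) \<Rightarrow> (real \<Rightarrow> real) \<Rightarrow> bool" where
  "dp f f' \<longleftrightarrow> (\<forall>x. (f has_real_derivative f' x) (at x)) \<and> continuous_on UNIV f' \<and> (\<forall>x. f' x > 0)"

lemma dp_isCont: "dp f f' \<Longrightarrow> isCont f' x"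
  unfolding dp_def by (simp add: continuous_on_eq_continuous_at)

lemma iter_Suc_left: "(f ^^ Suc n) x = f ((f ^^ n) x)"
  by simp

lemma iter_Suc_right: "(f ^^ Suc n) x = (f ^^ n) (f x)"
  by (metis funpow_Suc_right comp_apply)

lemma ORB:
  assumes tc: "tp c" and ta: "tp a" and pr: "PR c a" and dc: "dp c c'" and da: "dp a a'"
    and ap: "a p = p" and alo: "a lo \<noteq> lo"
    and lv: "(\<lambda>n. (inv c ^^ n) p) \<longlonglongrightarrow> q" and lm: "(\<lambda>n. (inv c ^^ n) m) \<longlonglongrightarrow> q"
    and btwn: "(p < lo \<and> lo < m) \<or> (m < lo \<and> lo < p)"
  shows False
proof -
  let ?ic = "inv c"
  have tic: "tp ?ic" using tc by (rule tp_inv)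
  define v where "v n = (?ic ^^ n) p" for n
  define w where "w n = (?ic ^^ n) lo" for n
  have vq: "v \<longlonglongrightarrow> q" using lv unfolding v_def .
  have cv: "c (v (Suc n)) = v n" for n unfolding v_def using tp_f_inv[OF tc] by simp
  have "(\<lambda>n. c (v (Suc n))) \<longlonglongrightarrow> c q"
    using isCont_tendsto_compose[OF tp_isCont[OF tc] LIMSEQ_Suc[OF vq]] .
  hence "v \<longlonglongrightarrow> c q" using cv by simp
  hence cq: "c q = q" using vq LIMSEQ_unique by blast
  have av: "a (v n) = v n" for n
  proof (induction n)
    case 0 show ?case using ap v_def by simp
  next
    case (Suc n)
    have "a (?ic (v n)) = ?ic (v n)" using PR_fix_inv[OF tc ta pr Suc] .
    thus ?case unfolding v_def by simp
  qed
  have "(\<lambda>n. a (v n)) \<longlonglongrightarrow> a q" using isCont_tendsto_compose[OF tp_isCont[OF ta] vq] .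
  hence "v \<longlonglongrightarrow> a q" using av by simp
  hence aq: "a q = q" using vq LIMSEQ_unique by blast
  have wq: "w \<longlonglongrightarrow> q"
    using btwn
  proof
    assume h: "p < lo \<and> lo < m"
    have l: "(?ic ^^ n) p \<le> w n" for n using iter_le[OF tic] h w_def by simp
    have u: "w n \<le> (?ic ^^ n) m" for n using iter_le[OF tic] h w_def by simp
    show ?thesis by (rule tendsto_sandwich[OF always_eventually always_eventually lv lm]) (use l u in auto)
  next
    assume h: "m < lo \<and> lo < p"
    have l: "(?ic ^^ n) m \<le> w n" for n using iter_le[OF tic] h w_def by simp
    have u: "w n \<le> (?ic ^^ n) p" for n using iter_le[OF tic] h w_def by simp
    show ?thesis by (rule tendsto_sandwich[OF always_eventually always_eventually lm lv]) (use l u in auto)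
  qed
  have cw: "\<forall>n. c (w (Suc n)) = w n" unfolding w_def using tp_f_inv[OF tc] by simp
  have w0: "a (w 0) \<noteq> w 0" using alo w_def by simp
  have D1: "\<forall>x. (c has_real_derivative c' x) (at x)" "c' q > 0" using dc unfolding dp_def by auto
  have D2: "\<forall>x. (a has_real_derivative a' x) (at x)" "a' q > 0" using da unfolding dp_def by auto
  show False
    using LEMMA_D[OF tc ta pr D1(1) dp_isCont[OF dc] D1(2) D2(1) dp_isCont[OF da] D2(2) cq aq cw wq w0] .
qed


lemma STEP:
  assumes ta: "tp a" and tb: "tp b" and tc: "tp c" and pab: "PR a b" and pca: "PR c a"
    and dc: "dp c c'" and da: "dp a a'"
    and cI: "conv I" and ia: "invs a I" and ib: "invs b I" and icI: "invs c I"
    and cofu: "\<forall>x\<in>I. \<exists>y\<in>I. c y = y \<and> x \<le> y" and cofd: "\<forall>x\<in>I. \<exists>y\<in>I. c y = y \<and> y \<le> x"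
    and pI: "p \<in> I" and ap: "a p = p" and bp: "b p = p" and rI: "r \<in> I" and pr: "p < r"
    and bfree: "\<forall>z. p < z \<and> z \<le> r \<longrightarrow> b z \<noteq> z"
  shows "c p = p \<and> (\<exists>r'\<in>I. p < r' \<and> (\<forall>z. p < z \<and> z \<le> r' \<longrightarrow> a z \<noteq> z))"
proof -
  define J where "J = {y\<in>I. p < y \<and> (\<forall>z. p < z \<and> z \<le> y \<longrightarrow> b z \<noteq> z)}"
  have cJ: "conv J" unfolding conv_def
  proof (intro allI impI)
    fix x y v assume xJ: "x \<in> J" and yJ: "y \<in> J" and xv: "x \<le> v" and vy: "v \<le> y"
    have "x \<in> I" "y \<in> I" "p < x" using xJ yJ unfolding J_def by auto
    hence "v \<in> I" using cI xv vy unfolding conv_def by blast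
    moreover have "p < v" using \<open>p < x\<close> xv by linarith
    moreover have "\<forall>z. p < z \<and> z \<le> v \<longrightarrow> b z \<noteq> z"
    proof (intro allI impI)
      fix z assume "p < z \<and> z \<le> v"
      hence "p < z \<and> z \<le> y" using vy by linarith
      thus "b z \<noteq> z" using yJ unfolding J_def by blast
    qed
    ultimately show "v \<in> J" unfolding J_def by blast
  qed
  have iaJ: "invs a J" unfolding invs_def
  proof
    fix x
    have 1: "a x \<in> I \<longleftrightarrow> x \<in> I" using ia unfolding invs_def by blast
    have 2: "p < a x \<longleftrightarrow> p < x" using tp_less[OF ta, of p x] ap by simp
    have 3: "(\<forall>z. p < z \<and> z \<le> a x \<longrightarrow> b z \<noteq> z) \<longleftrightarrow> (\<forall>z. p < z \<and> z \<le> x \<longrightarrow> b z \<noteq> z)"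
    proof
      assume h: "\<forall>z. p < z \<and> z \<le> a x \<longrightarrow> b z \<noteq> z"
      show "\<forall>z. p < z \<and> z \<le> x \<longrightarrow> b z \<noteq> z"
      proof (intro allI impI notI)
        fix z assume z: "p < z \<and> z \<le> x" and bz: "b z = z"
        have "b (a z) = a z" using PR_fix[OF ta tb pab bz] .
        moreover have "p < a z" using tp_less[OF ta, of p z] ap z by simp
        moreover have "a z \<le> a x" using tp_le[OF ta] z by simp
        ultimately show False using h by blast
      qed
    next
      assume h: "\<forall>z. p < z \<and> z \<le> x \<longrightarrow> b z \<noteq> z"
      show "\<forall>z. p < z \<and> z \<le> a x \<longrightarrow> b z \<noteq> z"
      proof (intro allI impI notI)
        fix z assume z: "p < z \<and> z \<le> a x" and bz: "b z = z"
        have "b (inv a z) = inv a z" using PR_fix_inv[OF ta tb pab bz] .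
        moreover have "p < inv a z"
          using tp_less[OF ta, of p "inv a z"] ap z tp_f_inv[OF ta] by simp
        moreover have "inv a z \<le> x" using tp_le[OF ta, of "inv a z" x] z tp_f_inv[OF ta] by simp
        ultimately show False using h by blast
      qed
    qed
    show "a x \<in> J \<longleftrightarrow> x \<in> J" unfolding J_def using 1 2 3 by blast
  qed
  have ibJ: "invs b J" unfolding invs_def
  proof
    fix x
    have 1: "b x \<in> I \<longleftrightarrow> x \<in> I" using ib unfolding invs_def by blast
    have 2: "p < b x \<longleftrightarrow> p < x" using tp_less[OF tb, of p x] bp by simp
    have 3: "(\<forall>z. p < z \<and> z \<le> b x \<longrightarrow> b z \<noteq> z) \<longleftrightarrow> (\<forall>z. p < z \<and> z \<le> x \<longrightarrow> b z \<noteq> z)"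
    proof -
      have e: "b z = z \<Longrightarrow> z \<le> b x \<longleftrightarrow> z \<le> x" for z using tp_le[OF tb, of z x] by simp
      show ?thesis
      proof
        assume h: "\<forall>z. p < z \<and> z \<le> b x \<longrightarrow> b z \<noteq> z"
        show "\<forall>z. p < z \<and> z \<le> x \<longrightarrow> b z \<noteq> z"
        proof (intro allI impI notI)
          fix z assume z: "p < z \<and> z \<le> x" and bz: "b z = z"
          hence "z \<le> b x" using e by blast
          thus False using h z bz by blast
        qed
      next
        assume h: "\<forall>z. p < z \<and> z \<le> x \<longrightarrow> b z \<noteq> z"
        show "\<forall>z. p < z \<and> z \<le> b x \<longrightarrow> b z \<noteq> z"
        proof (intro allI impI notI)
          fix z assume z: "p < z \<and> z \<le> b x" and bz: "b z = z"
          hence "z \<le> x" using e by blast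
          thus False using h z bz by blast
        qed
      qed
    qed
    show "b x \<in> J \<longleftrightarrow> x \<in> J" unfolding J_def using 1 2 3 by blast
  qed
  have bJ: "\<forall>x\<in>J. b x \<noteq> x" unfolding J_def by blast
  have rJ: "r \<in> J" unfolding J_def using rI pr bfree by blast
  obtain lo hi where lh: "lo \<in> J" "hi \<in> J" "\<forall>x\<in>J. x \<le> lo \<longrightarrow> a x < x"
    using CORE[OF ta tb pab cJ iaJ ibJ bJ rJ] by blast
  have loI: "lo \<in> I" and plo: "p < lo" using lh(1) unfolding J_def by auto
  have afree: "\<forall>z. p < z \<and> z \<le> lo \<longrightarrow> a z \<noteq> z"
  proof (intro allI impI)
    fix z assume z: "p < z \<and> z \<le> lo"
    have "p \<le> z" "z \<le> lo" using z by auto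
    hence "z \<in> I" using cI pI loI unfolding conv_def by blast
    moreover have "\<forall>w. p < w \<and> w \<le> z \<longrightarrow> b w \<noteq> w"
    proof (intro allI impI)
      fix w assume "p < w \<and> w \<le> z"
      hence "p < w \<and> w \<le> lo" using z by linarith
      thus "b w \<noteq> w" using lh(1) unfolding J_def by blast
    qed
    ultimately have "z \<in> J" unfolding J_def using z by blast
    hence "a z < z" using lh(3) z by blast
    thus "a z \<noteq> z" by simp
  qed
  have alo: "a lo \<noteq> lo" using afree plo by blast
  let ?ic = "inv c"
  have tic: "tp ?ic" using tc by (rule tp_inv)
  have cpp: "c p = p"
  proof (rule ccontr)
    assume ne: "c p \<noteq> p"
    show False
    proof (cases "p < c p")
      case True
      have acp: "a (c p) = c p" using PR_fix[OF tc ta pca ap] .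
      have locp: "lo < c p"
      proof (rule ccontr)
        assume "\<not> lo < c p"
        hence "c p \<le> lo" by simp
        thus False using afree[rule_format, of "c p"] True acp by simp
      qed
      have icp: "?ic p < p" using tp_less[OF tic, of p "c p"] True tp_inv_f[OF tc] by simp
      obtain g where g: "g \<in> I" "c g = g" "g \<le> p" using cofd pI by blast
      have icg: "?ic g = g" using g(2) tp_inv_f[OF tc] by metis
      have dv: "decseq (\<lambda>n. (?ic ^^ n) p)"
      proof (rule decseq_SucI)
        fix n show "(?ic ^^ Suc n) p \<le> (?ic ^^ n) p"
          using iter_le[OF tic, where n=n and x="?ic p" and y=p] icp iter_Suc_right[where f="?ic" and n=n and x=p] by simp
      qed
      have bd: "\<forall>n. g \<le> (?ic ^^ n) p"
      proof
        fix n
        have "(?ic ^^ n) g \<le> (?ic ^^ n) p" using iter_le[OF tic, where n=n and x=g and y=p] g(3) by simp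
        thus "g \<le> (?ic ^^ n) p" using iter_fix[where b="?ic", OF icg] by simp
      qed
      obtain q where q: "(\<lambda>n. (?ic ^^ n) p) \<longlonglongrightarrow> q" using decseq_convergent[OF dv bd] by blast
      have "(\<lambda>n. (?ic ^^ (Suc n)) (c p)) \<longlonglongrightarrow> q"
        using q iter_Suc_right[where f="?ic" and x="c p"] tp_inv_f[OF tc] by simp
      hence q2: "(\<lambda>n. (?ic ^^ n) (c p)) \<longlonglongrightarrow> q" by (rule LIMSEQ_imp_Suc)
      show False using ORB[OF tc ta pca dc da ap alo q q2] plo locp by blast
    next
      case False
      hence cpl: "c p < p" using ne by simp
      have icp: "p < ?ic p" using tp_less[OF tic, of "c p" p] cpl tp_inv_f[OF tc] by simp
      have aicp: "a (?ic p) = ?ic p" using PR_fix_inv[OF tc ta pca ap] .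
      have loicp: "lo < ?ic p"
      proof (rule ccontr)
        assume "\<not> lo < ?ic p"
        hence "?ic p \<le> lo" by simp
        thus False using afree[rule_format, of "?ic p"] icp aicp by simp
      qed
      obtain g where g: "g \<in> I" "c g = g" "p \<le> g" using cofu pI by blast
      have icg: "?ic g = g" using g(2) tp_inv_f[OF tc] by metis
      have iv: "incseq (\<lambda>n. (?ic ^^ n) p)"
      proof (rule incseq_SucI)
        fix n show "(?ic ^^ n) p \<le> (?ic ^^ Suc n) p"
          using iter_le[OF tic, where n=n and x=p and y="?ic p"] icp iter_Suc_right[where f="?ic" and n=n and x=p] by simp
      qed
      have bd: "\<forall>n. (?ic ^^ n) p \<le> g"
      proof
        fix n
        have "(?ic ^^ n) p \<le> (?ic ^^ n) g" using iter_le[OF tic, where n=n and x=p and y=g] g(3) by simp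
        thus "(?ic ^^ n) p \<le> g" using iter_fix[where b="?ic", OF icg] by simp
      qed
      obtain q where q: "(\<lambda>n. (?ic ^^ n) p) \<longlonglongrightarrow> q" using incseq_convergent[OF iv bd] by blast
      have q2: "(\<lambda>n. (?ic ^^ n) (?ic p)) \<longlonglongrightarrow> q"
        using LIMSEQ_Suc[OF q] iter_Suc_right[where f="?ic" and x=p] by simp
      show False using ORB[OF tc ta pca dc da ap alo q q2] plo loicp by blast
    qed
  qed
  show ?thesis using cpp loI plo afree by blast
qed


lemma MAIN_STEP:
  assumes c: "cyc f0 f1 f2 f3" and i: "ivl I f0 f1 f2 f3"
    and d0: "dp f0 g0" and d1: "dp f1 g1" and d2: "dp f2 g2" and d3: "dp f3 g3"
    and nofix: "\<forall>y\<in>I. \<not> (f0 y = y \<and> f1 y = y \<and> f2 y = y \<and> f3 y = y)"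
    and xI: "x \<in> I" and f0x: "f0 x = x" and f1x: "f1 x \<noteq> x"
  shows False
proof -
  note C = c[unfolded cyc_def] and V = i[unfolded ivl_def]
  have t0: "tp f0" and t1: "tp f1" and t2: "tp f2" and t3: "tp f3"
    and p01: "PR f0 f1" and p12: "PR f1 f2" and p23: "PR f2 f3" and p30: "PR f3 f0" using C by auto
  have cI: "conv I" and i0: "invs f0 I" and i1: "invs f1 I" and i2: "invs f2 I" and i3: "invs f3 I"
    using V by auto
  have c1: "cyc f1 f2 f3 f0" using cyc_rot[OF c] .
  have c2: "cyc f2 f3 f0 f1" using cyc_rot[OF c1] .
  have v1: "ivl I f1 f2 f3 f0" using ivl_rot[OF i] .
  have v2: "ivl I f2 f3 f0 f1" using ivl_rot[OF v1] .
  note cof1 = COF[OF c i]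
  note cof2 = COF[OF c1 v1]
  note cof3 = COF[OF c2 v2]
  obtain g where g: "g \<in> I" "f1 g = g" "g \<le> x" using cof1 xI by blast
  define I' where "I' = {y\<in>I. y \<le> x}"
  have cI': "conv I'" unfolding conv_def
  proof (intro allI impI)
    fix y1 y2 v assume "y1 \<in> I'" "y2 \<in> I'" "y1 \<le> v" "v \<le> y2"
    hence "y1 \<in> I" "y2 \<in> I" "y2 \<le> x" "y1 \<le> v" "v \<le> y2" unfolding I'_def by auto
    hence "v \<in> I" "v \<le> x" using cI unfolding conv_def by (blast, linarith)
    thus "v \<in> I'" unfolding I'_def by blast
  qed
  have gI': "g \<in> I'" "x \<in> I'" using g xI unfolding I'_def by auto
  have bndx: "\<forall>y\<in>I'. f1 y = y \<longrightarrow> y \<le> x" unfolding I'_def by blast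
  obtain p where p: "p \<in> I'" "f1 p = p" "\<forall>y\<in>I'. f1 y = y \<longrightarrow> y \<le> p"
    using MAXEX2[OF t1 cI' gI'(1) g(2) gI'(2) bndx] by blast
  have pI: "p \<in> I" and px: "p \<le> x" using p(1) unfolding I'_def by auto
  have px': "p < x" using px f1x p(2) by (cases "p = x") auto
  have bfree: "\<forall>z. p < z \<and> z \<le> x \<longrightarrow> f1 z \<noteq> z"
  proof (intro allI impI notI)
    fix z assume z: "p < z \<and> z \<le> x" and fz: "f1 z = z"
    have "p \<le> z" using z by simp
    hence "z \<in> I" using cI pI xI z unfolding conv_def by blast
    hence "z \<in> I'" using z unfolding I'_def by blast
    hence "z \<le> p" using p(3) fz by blast
    thus False using z by simp
  qed
  have f0p: "f0 p = p"
  proof (rule ccontr)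
    assume ne: "f0 p \<noteq> p"
    show False
    proof (cases "p < f0 p")
      case True
      have "f1 (f0 p) = f0 p" using PR_fix[OF t0 t1 p01 p(2)] .
      moreover have "f0 p \<in> I" using i0 pI unfolding invs_def by blast
      moreover have "f0 p < x" using tp_less[OF t0, of p x] px' f0x by simp
      ultimately have "f0 p \<in> I'" "f1 (f0 p) = f0 p" unfolding I'_def by auto
      hence "f0 p \<le> p" using p(3) by blast
      thus False using True by simp
    next
      case False
      hence lt: "f0 p < p" using ne by simp
      have pp: "p < inv f0 p" using tp_less[OF t0, of p "inv f0 p"] lt tp_f_inv[OF t0] by simp
      have "f1 (inv f0 p) = inv f0 p" using PR_fix_inv[OF t0 t1 p01 p(2)] .
      moreover have "inv f0 p \<in> I" using invs_inv[OF t0 i0] pI unfolding invs_def by blast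
      moreover have "inv f0 p < x"
      proof -
        have "f0 (inv f0 p) < f0 x" using tp_f_inv[OF t0] f0x px' by simp
        thus ?thesis using tp_less[OF t0] by blast
      qed
      ultimately have "inv f0 p \<in> I'" "f1 (inv f0 p) = inv f0 p" unfolding I'_def by auto
      hence "inv f0 p \<le> p" using p(3) by blast
      thus False using pp by simp
    qed
  qed
  obtain r' where st1: "f3 p = p" "r' \<in> I" "p < r'" "\<forall>z. p < z \<and> z \<le> r' \<longrightarrow> f0 z \<noteq> z"
    using STEP[OF t0 t1 t3 p01 p30 d3 d0 cI i0 i1 i3 _ _ pI f0p p(2) xI px' bfree] cof3 by blast
  have "f2 p = p"
    using STEP[OF t3 t0 t2 p30 p23 d2 d3 cI i3 i0 i2 _ _ pI st1(1) f0p st1(2) st1(3) st1(4)] cof2 by blast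
  thus False using nofix pI f0p p(2) st1(1) by blast
qed

lemma NO_INTERVAL:
  assumes c: "cyc f0 f1 f2 f3" and i: "ivl I f0 f1 f2 f3"
    and d0: "dp f0 g0" and d1: "dp f1 g1" and d2: "dp f2 g2" and d3: "dp f3 g3"
    and nofix: "\<forall>y\<in>I. \<not> (f0 y = y \<and> f1 y = y \<and> f2 y = y \<and> f3 y = y)"
  shows False
proof -
  have c1: "cyc f1 f2 f3 f0" using cyc_rot[OF c] .
  have c2: "cyc f2 f3 f0 f1" using cyc_rot[OF c1] .
  have c3: "cyc f3 f0 f1 f2" using cyc_rot[OF c2] .
  have v1: "ivl I f1 f2 f3 f0" using ivl_rot[OF i] .
  have v2: "ivl I f2 f3 f0 f1" using ivl_rot[OF v1] .
  have v3: "ivl I f3 f0 f1 f2" using ivl_rot[OF v2] .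
  have n1: "\<forall>y\<in>I. \<not> (f1 y = y \<and> f2 y = y \<and> f3 y = y \<and> f0 y = y)" using nofix by blast
  have n2: "\<forall>y\<in>I. \<not> (f2 y = y \<and> f3 y = y \<and> f0 y = y \<and> f1 y = y)" using nofix by blast
  obtain u where u: "u \<in> I" "f0 u = u" using NONEMPTY[OF c3 v3] by blast
  have u1: "f1 u = u" using MAIN_STEP[OF c i d0 d1 d2 d3 nofix u(1) u(2)] by blast
  have u2: "f2 u = u" using MAIN_STEP[OF c1 v1 d1 d2 d3 d0 n1 u(1) u1] by blast
  have u3: "f3 u = u" using MAIN_STEP[OF c2 v2 d2 d3 d0 d1 n2 u(1) u2] by blast
  show False using nofix u u1 u2 u3 by blast
qed


lemma C1_props:
  assumes "C1_diffeo f"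
  shows "bij f \<and> continuous_on UNIV f \<and> continuous_on UNIV (inv f) \<and>
    (\<exists>f'. (\<forall>x. (f has_real_derivative f' x) (at x)) \<and> continuous_on UNIV f' \<and> ((\<forall>x. f' x > 0) \<or> (\<forall>x. f' x < 0)))"
proof -
  have bf: "bij f" using assms unfolding C1_diffeo_def by blast
  obtain f' where df: "\<forall>x. (f has_real_derivative f' x) (at x)" and cf: "continuous_on UNIV f'"
    using assms unfolding C1_diffeo_def C1_real_def by blast
  obtain g' where dg: "\<forall>x. (inv f has_real_derivative g' x) (at x)"
    using assms unfolding C1_diffeo_def C1_real_def by blast
  have contf: "continuous_on UNIV f"
    using df by (meson DERIV_isCont continuous_at_imp_continuous_on)
  have contg: "continuous_on UNIV (inv f)"
    using dg by (meson DERIV_isCont continuous_at_imp_continuous_on)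
  have nz: "f' x \<noteq> 0" for x
  proof -
    have "(inv f \<circ> f has_real_derivative g' (f x) * f' x) (at x)"
      using DERIV_chain[OF dg[rule_format, of "f x"] df[rule_format, of x]] .
    moreover have "inv f \<circ> f = (\<lambda>x. x)" using bf by (simp add: bij_is_inj fun_eq_iff)
    ultimately have "((\<lambda>x. x) has_real_derivative g' (f x) * f' x) (at x)" by simp
    hence "g' (f x) * f' x = 1" using DERIV_ident DERIV_unique by blast
    thus ?thesis by auto
  qed
  have sgn: "(\<forall>x. f' x > 0) \<or> (\<forall>x. f' x < 0)"
  proof (rule ccontr)
    assume "\<not> ?thesis"
    then obtain x1 x2 where x1: "f' x1 < 0" and x2: "f' x2 > 0" using nz by (meson linorder_neqE_linordered_idom)
    have c: "continuous_on S f'" for S using cf continuous_on_subset by blast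
    show False
    proof (cases "x1 \<le> x2")
      case True
      obtain x where "f' x = 0" using IVT'[of f' x1 0 x2] c x1 x2 True by force
      thus False using nz by blast
    next
      case False
      obtain x where "f' x = 0" using IVT2'[of f' x1 0 x2] c x1 x2 False by force
      thus False using nz by blast
    qed
  qed
  show ?thesis using bf contf contg df cf sgn by blast
qed

lemma pos_mono:
  assumes "\<forall>x. (f has_real_derivative f' x) (at x)" "\<forall>x. f' x > 0"
  shows "strict_mono f"
proof (rule strict_monoI)
  fix x y :: real assume "x < y"
  thus "f x < f y" using DERIV_pos_imp_increasing[of x y f] assms by blast
qed

lemma neg_anti:
  assumes "\<forall>x. (f has_real_derivative f' x) (at x)" "\<forall>x. f' x < 0"
  shows "\<forall>x y. x < y \<longrightarrow> f y < f x"
proof (intro allI impI)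
  fix x y :: real assume "x < y"
  thus "f y < f x" using DERIV_neg_imp_decreasing[of x y f] assms by blast
qed

lemma NOTDEC:
  fixes f g :: "real \<Rightarrow> real"
  assumes bg: "bij g" and mg: "strict_mono g \<or> (\<forall>x y. x < y \<longrightarrow> g y < g x)"
    and df: "\<forall>x y. x < y \<longrightarrow> f y < f x" and rel: "\<forall>x. f (f x) = g (f (inv g x))"
  shows False
proof -
  have gi: "g (inv g x) = x" for x using bg by (meson bij_is_surj surj_f_inv_f)
  have "f 1 < f 0" using df by simp
  hence lhs: "f (f 0) < f (f 1)" using df by blast
  have ne: "inv g 0 \<noteq> inv g 1" using gi by (metis zero_neq_one)
  from mg show False
  proof
    assume m: "strict_mono g"
    have "inv g 0 < inv g 1"
    proof (rule ccontr)
      assume "\<not> inv g 0 < inv g 1"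
      hence "inv g 1 < inv g 0" using ne by simp
      hence "g (inv g 1) < g (inv g 0)" using m by (simp add: strict_mono_less)
      thus False using gi by simp
    qed
    hence "f (inv g 1) < f (inv g 0)" using df by blast
    hence "g (f (inv g 1)) < g (f (inv g 0))" using m by (simp add: strict_mono_less)
    thus False using lhs rel by simp
  next
    assume m: "\<forall>x y. x < y \<longrightarrow> g y < g x"
    have "inv g 1 < inv g 0"
    proof (rule ccontr)
      assume "\<not> inv g 1 < inv g 0"
      hence "inv g 0 < inv g 1" using ne by simp
      hence "g (inv g 1) < g (inv g 0)" using m by blast
      thus False using gi by simp
    qed
    hence "f (inv g 1) > f (inv g 0)" using df by blast
    hence "g (f (inv g 1)) < g (f (inv g 0))" using m by blast
    thus False using lhs rel by simp
  qed
qed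

lemma GEN:
  assumes cf: "C1_diffeo f" and ch: "C1_diffeo h" and rel: "h \<circ> f \<circ> inv h = f \<circ> f"
  shows "tp f \<and> (\<exists>f'. dp f f')"
proof -
  obtain f' where F: "bij f" "continuous_on UNIV f" "continuous_on UNIV (inv f)"
    "\<forall>x. (f has_real_derivative f' x) (at x)" "continuous_on UNIV f'" "(\<forall>x. f' x > 0) \<or> (\<forall>x. f' x < 0)"
    using C1_props[OF cf] by blast
  obtain h' where H: "bij h" "\<forall>x. (h has_real_derivative h' x) (at x)" "(\<forall>x. h' x > 0) \<or> (\<forall>x. h' x < 0)"
    using C1_props[OF ch] by blast
  have mh: "strict_mono h \<or> (\<forall>x y. x < y \<longrightarrow> h y < h x)"
    using H(3) pos_mono[OF H(2)] neg_anti[OF H(2)] by blast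
  have rel': "\<forall>x. f (f x) = h (f (inv h x))" using rel by (metis comp_apply)
  have pos: "\<forall>x. f' x > 0"
  proof (rule ccontr)
    assume "\<not> ?thesis"
    hence "\<forall>x. f' x < 0" using F(6) by blast
    thus False using NOTDEC[OF H(1) mh neg_anti[OF F(4)] rel'] by blast
  qed
  have "strict_mono f" using pos_mono[OF F(4) pos] .
  hence "tp f" unfolding tp_def using F by blast
  moreover have "dp f f'" unfolding dp_def using F(4,5) pos by blast
  ultimately show ?thesis by blast
qed

lemma GEN_PR:
  assumes th: "tp h" and rel: "h \<circ> f \<circ> inv h = f \<circ> f"
  shows "PR h f"
  unfolding PR_def
proof
  fix x
  have "(h \<circ> f \<circ> inv h) (h x) = (f \<circ> f) (h x)" using rel by simp
  thus "h (f x) = f (f (h x))" using tp_inv_f[OF th] by simp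
qed

lemma invs_G:
  assumes tf: "tp f" and fg: "\<forall>g\<in>G. f g = g"
  shows "invs f {y. \<forall>g\<in>G. \<not> (min z y \<le> g \<and> g \<le> max z y)}"
  unfolding invs_def
proof
  fix y
  have e: "(min z (f y) \<le> g \<and> g \<le> max z (f y)) \<longleftrightarrow> (min z y \<le> g \<and> g \<le> max z y)" if "g \<in> G" for g
  proof -
    have 1: "g \<le> f y \<longleftrightarrow> g \<le> y" using tp_le[OF tf, of g y] fg that by simp
    have 2: "f y \<le> g \<longleftrightarrow> y \<le> g" using tp_le[OF tf, of y g] fg that by simp
    show ?thesis unfolding min_le_iff_disj le_max_iff_disj using 1 2 by blast
  qed
  show "f y \<in> {y. \<forall>g\<in>G. \<not> (min z y \<le> g \<and> g \<le> max z y)} \<longleftrightarrow> y \<in> {y. \<forall>g\<in>G. \<not> (min z y \<le> g \<and> g \<le> max z y)}"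
    using e by auto
qed


lemma arith_up:
  fixes x y z g e :: real
  assumes "min z y \<le> g" "g \<le> max z y" "y = x + e / 2" "e > 0"
  shows "(min z x \<le> g \<and> g \<le> max z x) \<or> \<bar>g - x\<bar> < e"
  using assms unfolding min_def max_def by (auto split: if_splits)

lemma arith_dn:
  fixes x y z g e :: real
  assumes "min z y \<le> g" "g \<le> max z y" "y = x - e / 2" "e > 0"
  shows "(min z x \<le> g \<and> g \<le> max z x) \<or> \<bar>g - x\<bar> < e"
  using assms unfolding min_def max_def by (auto split: if_splits)

lemma arith_conv:
  fixes y1 y2 v z g :: real
  assumes "y1 \<le> v" "v \<le> y2" "min z v \<le> g" "g \<le> max z v"
  shows "(min z y1 \<le> g \<and> g \<le> max z y1) \<or> (min z y2 \<le> g \<and> g \<le> max z y2)"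
  using assms unfolding min_def max_def by (auto split: if_splits)

theorem proposition5p1:
  fixes a :: "nat \<Rightarrow> real \<Rightarrow> real"
  assumes "higman_rep a"
  shows "\<forall>i<4. a i = id"
proof -
  have C: "\<And>i. i < 4 \<Longrightarrow> C1_diffeo (a i)" using assms unfolding higman_rep_def by blast
  have R: "\<And>i. i < 4 \<Longrightarrow> a i \<circ> a ((i + 1) mod 4) \<circ> inv (a i) = a ((i + 1) mod 4) \<circ> a ((i + 1) mod 4)"
    using assms unfolding higman_rep_def by blast
  have md0: "((0::nat) + 1) mod 4 = 1" and md1: "((1::nat) + 1) mod 4 = 2"
    and md2: "((2::nat) + 1) mod 4 = 3" and md3: "((3::nat) + 1) mod 4 = 0" by simp_all
  have R0: "a 0 \<circ> a 1 \<circ> inv (a 0) = a 1 \<circ> a 1" using R[of 0, unfolded md0] by simp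
  have R1: "a 1 \<circ> a 2 \<circ> inv (a 1) = a 2 \<circ> a 2" using R[of 1, unfolded md1] by simp
  have R2: "a 2 \<circ> a 3 \<circ> inv (a 2) = a 3 \<circ> a 3" using R[of 2, unfolded md2] by simp
  have R3: "a 3 \<circ> a 0 \<circ> inv (a 3) = a 0 \<circ> a 0" using R[of 3, unfolded md3] by simp
  have C0: "C1_diffeo (a 0)" and C1: "C1_diffeo (a 1)" and C2: "C1_diffeo (a 2)" and C3: "C1_diffeo (a 3)"
    using C by auto
  obtain g0 where t0: "tp (a 0)" and d0: "dp (a 0) g0" using GEN[OF C0 C3 R3] by blast
  obtain g1 where t1: "tp (a 1)" and d1: "dp (a 1) g1" using GEN[OF C1 C0 R0] by blast
  obtain g2 where t2: "tp (a 2)" and d2: "dp (a 2) g2" using GEN[OF C2 C1 R1] by blast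
  obtain g3 where t3: "tp (a 3)" and d3: "dp (a 3) g3" using GEN[OF C3 C2 R2] by blast
  have cy: "cyc (a 0) (a 1) (a 2) (a 3)"
    unfolding cyc_def using t0 t1 t2 t3 GEN_PR[OF t0 R0] GEN_PR[OF t1 R1] GEN_PR[OF t2 R2] GEN_PR[OF t3 R3]
    by blast
  define G where "G = {x. a 0 x = x \<and> a 1 x = x \<and> a 2 x = x \<and> a 3 x = x}"
  show ?thesis
  proof (cases "\<forall>x. x \<in> G")
    case True
    show ?thesis
    proof (intro allI impI)
      fix i :: nat assume "i < 4"
      hence "i = 0 \<or> i = 1 \<or> i = 2 \<or> i = 3" by arith
      thus "a i = id" using True unfolding G_def by (auto simp: fun_eq_iff)
    qed
  next
    case False
    then obtain z where zG: "z \<notin> G" by blast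
    define I where "I = {y. \<forall>g\<in>G. \<not> (min z y \<le> g \<and> g \<le> max z y)}"
    have notG: "y \<notin> G" if "y \<in> I" for y
    proof
      assume "y \<in> G"
      moreover have "min z y \<le> y \<and> y \<le> max z y" by simp
      ultimately show False using that unfolding I_def by blast
    qed
    have cG: "closed G"
    proof -
      have "G = {x. a 0 x = x} \<inter> {x. a 1 x = x} \<inter> {x. a 2 x = x} \<inter> {x. a 3 x = x}"
        unfolding G_def by blast
      thus ?thesis using closed_fix[OF t0] closed_fix[OF t1] closed_fix[OF t2] closed_fix[OF t3]
        by (simp add: closed_Int)
    qed
    have oG: "open (- G)" using cG by (simp add: open_Compl)
    have ballG: "\<exists>e>0. \<forall>g\<in>G. \<not> \<bar>g - x\<bar> < e" if "x \<in> I" for x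
    proof -
      have "x \<in> - G" using notG[OF that] by simp
      then obtain e where e: "e > 0" "ball x e \<subseteq> - G" using oG open_contains_ball by blast
      have "\<forall>g\<in>G. \<not> \<bar>g - x\<bar> < e"
      proof (intro ballI notI)
        fix g assume "g \<in> G" "\<bar>g - x\<bar> < e"
        hence "g \<in> ball x e" by (simp add: dist_real_def abs_minus_commute)
        thus False using e(2) \<open>g \<in> G\<close> by blast
      qed
      thus ?thesis using e(1) by blast
    qed
    have cI: "conv I" unfolding conv_def
    proof (intro allI impI)
      fix y1 y2 v assume y1: "y1 \<in> I" and y2: "y2 \<in> I" and "y1 \<le> v" "v \<le> y2"
      show "v \<in> I" unfolding I_def
      proof (intro CollectI ballI notI)
        fix g assume gG: "g \<in> G" and h: "min z v \<le> g \<and> g \<le> max z v"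
        have "(min z y1 \<le> g \<and> g \<le> max z y1) \<or> (min z y2 \<le> g \<and> g \<le> max z y2)"
          using arith_conv[OF \<open>y1 \<le> v\<close> \<open>v \<le> y2\<close>] h by blast
        thus False using y1 y2 gG unfolding I_def by blast
      qed
    qed
    have nmax: "\<forall>x\<in>I. \<exists>y\<in>I. x < y"
    proof
      fix x assume xI: "x \<in> I"
      obtain e where e: "e > 0" "\<forall>g\<in>G. \<not> \<bar>g - x\<bar> < e" using ballG[OF xI] by blast
      define y where "y = x + e / 2"
      have "y \<in> I" unfolding I_def
      proof (intro CollectI ballI notI)
        fix g assume gG: "g \<in> G" and h: "min z y \<le> g \<and> g \<le> max z y"
        have "(min z x \<le> g \<and> g \<le> max z x) \<or> \<bar>g - x\<bar> < e"
          using arith_up[of z y g x e] h y_def e(1) by blast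
        thus False using xI gG e(2) unfolding I_def by blast
      qed
      moreover have "x < y" using e(1) y_def by simp
      ultimately show "\<exists>y\<in>I. x < y" by blast
    qed
    have nmin: "\<forall>x\<in>I. \<exists>y\<in>I. y < x"
    proof
      fix x assume xI: "x \<in> I"
      obtain e where e: "e > 0" "\<forall>g\<in>G. \<not> \<bar>g - x\<bar> < e" using ballG[OF xI] by blast
      define y where "y = x - e / 2"
      have "y \<in> I" unfolding I_def
      proof (intro CollectI ballI notI)
        fix g assume gG: "g \<in> G" and h: "min z y \<le> g \<and> g \<le> max z y"
        have "(min z x \<le> g \<and> g \<le> max z x) \<or> \<bar>g - x\<bar> < e"
          using arith_dn[of z y g x e] h y_def e(1) by blast
        thus False using xI gG e(2) unfolding I_def by blast
      qed
      moreover have "y < x" using e(1) y_def by simp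
      ultimately show "\<exists>y\<in>I. y < x" by blast
    qed
    have zI: "z \<in> I" unfolding I_def
    proof (intro CollectI ballI notI)
      fix g assume "g \<in> G" "min z z \<le> g \<and> g \<le> max z z"
      hence "g = z" by simp
      thus False using zG \<open>g \<in> G\<close> by simp
    qed
    have fG0: "\<forall>g\<in>G. a 0 g = g" and fG1: "\<forall>g\<in>G. a 1 g = g" and fG2: "\<forall>g\<in>G. a 2 g = g"
      and fG3: "\<forall>g\<in>G. a 3 g = g" unfolding G_def by auto
    have iv: "ivl I (a 0) (a 1) (a 2) (a 3)"
      unfolding ivl_def I_def
      using cI[unfolded I_def] nmax[unfolded I_def] nmin[unfolded I_def] zI[unfolded I_def]
        invs_G[OF t0 fG0] invs_G[OF t1 fG1] invs_G[OF t2 fG2] invs_G[OF t3 fG3]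
      by blast
    have nofix: "\<forall>y\<in>I. \<not> (a 0 y = y \<and> a 1 y = y \<and> a 2 y = y \<and> a 3 y = y)"
      using notG unfolding G_def by blast
    show ?thesis using NO_INTERVAL[OF cy iv d0 d1 d2 d3 nofix] by blast
  qed
qed

end
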